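(* Let $A \in \mathbb{R}^{m \times n}$ and $b \in \mathbb{R}^m$, and suppose that $\mathcal{P} = \{x \in \mathbb{R}^n : Ax \geq b\}$ is a polytope (i.e., bounded) and that we are in the nondegenerate setting (distinct feasible bases have distinct basic points). Let $G = (V,E)$ be a finite undirected graph whose vertices are subsets of $[m]$. Suppose that all of the following hold: (i) $G$ is nonempty; (ii) every $I \in V$ is a feasible basis; (iii) for every $I \in V$ and every $J \in N_G(I)$, $\#(I \cap J) = n-1$; (iv) for every $I \in V$, $\# N_G(I) = n$. Then $G = G_\mathrm{bases}$.
   Context: $[m] = \{1,\dots,m\}$. For $I \subset [m]$, $A_I$ and $b_I$ denote the submatrix of $A$ (resp. subvector of $b$) formed by the rows indexed by $I$. A basis is a subset $I \subset [m]$ with $\#I = n$ such that $A_I$ is nonsingular; its basic point is the unique solution $x^I$ of $A_I x = b_I$. The basis is feasible if $x^I \in \mathcal{P}$. Two feasible bases $I, I'$ are adjacent if $\#(I \cap I') = n-1$. $G_\mathrm{bases}$ is the graph whose vertices are the feasible bases of $\mathcal{P}$ and whose edges join adjacent feasible bases. $N_G(I)$ is the set of neighbors of $I$ in $G$. The nondegenerate setting means that the map $I \mapsto x^I$ from feasible bases to points is injective. *)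

theory Defs
  imports "Jordan_Normal_Form.Determinant" "Jordan_Normal_Form.DL_Submatrix"
begin

text \<open>Rows of A are indexed by 0..<m (the paper's [m] = 1..m, shifted by one).
  A is an m x n real matrix, b a vector of dimension m.\<close>

definition polyhedron :: "real mat \<Rightarrow> real vec \<Rightarrow> real vec set" where
  "polyhedron A b = {x \<in> carrier_vec (dim_col A). \<forall>i < dim_row A. row A i \<bullet> x \<ge> b $ i}"

definition is_polytope :: "real mat \<Rightarrow> real vec \<Rightarrow> bool" where
  "is_polytope A b \<longleftrightarrow> (\<exists>M. \<forall>x \<in> polyhedron A b. \<forall>j < dim_col A. \<bar>x $ j\<bar> \<le> M)"

definition is_basis :: "real mat \<Rightarrow> nat set \<Rightarrow> bool" where
  "is_basis A I \<longleftrightarrow> I \<subseteq> {0..<dim_row A} \<and> card I = dim_col A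
     \<and> det (submatrix A I {0..<dim_col A}) \<noteq> 0"

definition basic_point :: "real mat \<Rightarrow> real vec \<Rightarrow> nat set \<Rightarrow> real vec" where
  "basic_point A b I = (THE x. x \<in> carrier_vec (dim_col A) \<and> (\<forall>i \<in> I. row A i \<bullet> x = b $ i))"

definition feasible_basis :: "real mat \<Rightarrow> real vec \<Rightarrow> nat set \<Rightarrow> bool" where
  "feasible_basis A b I \<longleftrightarrow> is_basis A I \<and> basic_point A b I \<in> polyhedron A b"

definition nondegenerate :: "real mat \<Rightarrow> real vec \<Rightarrow> bool" where
  "nondegenerate A b \<longleftrightarrow> inj_on (basic_point A b) {I. feasible_basis A b I}"

definition is_graph :: "'a set \<Rightarrow> 'a set set \<Rightarrow> bool" where
  "is_graph V E \<longleftrightarrow> (\<forall>e \<in> E. \<exists>I J. e = {I, J} \<and> I \<in> V \<and> J \<in> V \<and> I \<noteq> J)"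

definition neighbors :: "'a set set \<Rightarrow> 'a \<Rightarrow> 'a set" where
  "neighbors E I = {J. {I, J} \<in> E \<and> J \<noteq> I}"

definition bases_vertices :: "real mat \<Rightarrow> real vec \<Rightarrow> nat set set" where
  "bases_vertices A b = {I. feasible_basis A b I}"

definition bases_edges :: "real mat \<Rightarrow> real vec \<Rightarrow> nat set set set" where
  "bases_edges A b = {{I, J} | I J. feasible_basis A b I \<and> feasible_basis A b J \<and> I \<noteq> J
       \<and> card (I \<inter> J) = dim_col A - 1}"

end

theory Submission
  imports Defs
begin

lemma pick_atLeast0: "j < n \<Longrightarrow> pick {0..<n} j = j"
proof -
  assume "j < n"
  then have "{a \<in> {0..<n}. a < j} = {0..<j}" by auto
  then show ?thesis using pick_card_in_set[of j "{0..<n}"] \<open>j < n\<close> by simp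
qed

lemma pick_inj: assumes "r1 < card I" "r2 < card I" "pick I r1 = pick I r2" shows "r1 = r2"
  using card_pick_le[OF assms(1)] card_pick_le[OF assms(2)] assms(3) by metis

lemma pick_surj: assumes "finite I" "j \<in> I" shows "\<exists>r < card I. pick I r = j"
proof -
  have "{a \<in> I. a < j} \<subset> I" using assms by auto
  then have "card {a \<in> I. a < j} < card I" using assms(1) psubset_card_mono by blast
  then show ?thesis using pick_card_in_set[OF assms(2)] by blast
qed

lemma sp_lin3:
  assumes "dim_vec x = n" "dim_vec y = n" "dim_vec z = n"
  shows "a \<bullet> vec n (\<lambda>j. p * x $ j + q * y $ j + s * z $ j) = p * (a \<bullet> x) + q * (a \<bullet> y) + s * (a \<bullet> (z::real vec))"
  using assms unfolding scalar_prod_def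
  by (simp add: sum.distrib sum_distrib_left algebra_simps)

lemma basis_lin:
  fixes A :: "real mat"
  assumes A: "A \<in> carrier_mat m n" and I: "I \<subseteq> {0..<m}" "card I = n"
    and d: "det (submatrix A I {0..<n}) \<noteq> 0"
  shows "\<And>v. v \<in> carrier_vec n \<Longrightarrow> (\<forall>j\<in>I. row A j \<bullet> v = 0) \<Longrightarrow> v = 0\<^sub>v n"
    and "\<exists>x \<in> carrier_vec n. \<forall>j\<in>I. row A j \<bullet> x = (b::real vec) $ j"
    and "c \<in> carrier_vec n \<Longrightarrow> \<exists>\<mu>. \<forall>v\<in>carrier_vec n. c \<bullet> v = (\<Sum>r<n. \<mu> r * (row A (pick I r) \<bullet> v))"
proof -
  let ?S = "submatrix A I {0..<n}"
  have fI: "finite I" using I finite_subset by blast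
  have c1: "{i. i < dim_row A \<and> i \<in> I} = I" using A I by auto
  have c2: "{j. j < dim_col A \<and> j \<in> {0..<n}} = {0..<n}" using A by auto
  have S: "?S \<in> carrier_mat n n" unfolding carrier_mat_def using dim_submatrix[of A I "{0..<n}"] c1 c2 I by simp
  have pickI: "r < n \<Longrightarrow> pick I r \<in> I" for r using pick_in_set_le[of r I] I by auto
  have rowS: "row ?S r = row A (pick I r)" if r: "r < n" for r
  proof (rule eq_vecI)
    show "dim_vec (row ?S r) = dim_vec (row A (pick I r))" using S A by simp
    fix j assume "j < dim_vec (row A (pick I r))"
    then have j: "j < n" using A by simp
    have "pick I r < m" using pickI[OF r] I by auto
    then show "row ?S r $ j = row A (pick I r) $ j"
      using S A r j submatrix_index[of r A I j "{0..<n}"] c1 c2 I pick_atLeast0[OF j] by simp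
  qed
  have Sv: "?S *\<^sub>v v = vec n (\<lambda>r. row A (pick I r) \<bullet> v)" for v
    using S rowS by (intro eq_vecI) auto
  show U: "v = 0\<^sub>v n" if v: "v \<in> carrier_vec n" and h: "\<forall>j\<in>I. row A j \<bullet> v = 0" for v
  proof (rule ccontr)
    assume "v \<noteq> 0\<^sub>v n"
    moreover have "?S *\<^sub>v v = 0\<^sub>v n" unfolding Sv using h pickI by (intro eq_vecI) auto
    ultimately have "det ?S = 0" using det_0_iff_vec_prod_zero_field[OF S] v by blast
    then show False using d by simp
  qed
  obtain B where B: "B \<in> carrier_mat n n" and BS: "B * ?S = 1\<^sub>m n" and SB: "?S * B = 1\<^sub>m n"
  proof -
    have "?S \<in> Units (ring_mat TYPE(real) n ())" by (rule det_non_zero_imp_unit[OF S d])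
    then have "\<exists>B \<in> carrier_mat n n. B * ?S = 1\<^sub>m n \<and> ?S * B = 1\<^sub>m n"
      unfolding Units_def ring_mat_def by simp
    then show ?thesis using that by blast
  qed
  show "\<exists>x \<in> carrier_vec n. \<forall>j\<in>I. row A j \<bullet> x = b $ j"
  proof -
    define bI where "bI = vec n (\<lambda>r. b $ pick I r)"
    define x where "x = B *\<^sub>v bI"
    have bI: "bI \<in> carrier_vec n" unfolding bI_def by simp
    have x: "x \<in> carrier_vec n" unfolding x_def by (rule mult_mat_vec_carrier[OF B bI])
    have "?S *\<^sub>v x = (?S * B) *\<^sub>v bI" unfolding x_def
      by (rule assoc_mult_mat_vec[OF S B bI, symmetric])
    also have "\<dots> = bI" unfolding SB by (rule one_mult_mat_vec[OF bI])
    finally have Sx: "?S *\<^sub>v x = bI" .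
    have "row A (pick I r) \<bullet> x = b $ pick I r" if r: "r < n" for r
    proof -
      have "(?S *\<^sub>v x) $ r = bI $ r" using Sx by simp
      then show ?thesis unfolding Sv bI_def using r by simp
    qed
    note tight = this
    have "\<forall>j\<in>I. row A j \<bullet> x = b $ j"
    proof (intro ballI)
      fix j assume "j \<in> I"
      then obtain r where "r < card I" "pick I r = j" using pick_surj[OF fI] by blast
      then show "row A j \<bullet> x = b $ j" using tight I by auto
    qed
    then show ?thesis using x by blast
  qed
  assume c: "c \<in> carrier_vec n"
  define \<mu> where "\<mu> = vec n (\<lambda>j. c \<bullet> col B j)"
  show "\<exists>\<mu>. \<forall>v\<in>carrier_vec n. c \<bullet> v = (\<Sum>r<n. \<mu> r * (row A (pick I r) \<bullet> v))"
  proof (intro exI ballI)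
    fix v :: "real vec" assume v: "v \<in> carrier_vec n"
    have Svc: "?S *\<^sub>v v \<in> carrier_vec n" by (rule mult_mat_vec_carrier[OF S v])
    have "B *\<^sub>v (?S *\<^sub>v v) = (B * ?S) *\<^sub>v v" by (rule assoc_mult_mat_vec[OF B S v, symmetric])
    also have "\<dots> = v" unfolding BS by (rule one_mult_mat_vec[OF v])
    finally have vv: "v = B *\<^sub>v (?S *\<^sub>v v)" by (rule sym)
    have Bd: "dim_row B = n" using B by simp
    have "c \<bullet> v = c \<bullet> vec n (\<lambda>i. row B i \<bullet> (?S *\<^sub>v v))"
      apply (subst vv) unfolding mult_mat_vec_def Bd ..
    also have "\<dots> = \<mu> \<bullet> (?S *\<^sub>v v)" unfolding \<mu>_def
      by (rule assoc_scalar_prod[OF c B Svc, symmetric])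
    also have "\<dots> = (\<Sum>r<n. \<mu> $ r * (row A (pick I r) \<bullet> v))"
      unfolding Sv scalar_prod_def using lessThan_atLeast0 by (simp add: \<mu>_def)
    finally show "c \<bullet> v = (\<Sum>r<n. \<mu> $ r * (row A (pick I r) \<bullet> v))" .
  qed
qed


lemma bp_char:
  fixes A :: "real mat"
  assumes A: "A \<in> carrier_mat m n" and B: "is_basis A I"
  shows "basic_point A b I \<in> carrier_vec n \<and> (\<forall>j\<in>I. row A j \<bullet> basic_point A b I = b $ j)"
    and "\<And>y. y \<in> carrier_vec n \<Longrightarrow> (\<forall>j\<in>I. row A j \<bullet> y = b $ j) \<Longrightarrow> y = basic_point A b I"
proof -
  have I: "I \<subseteq> {0..<m}" "card I = n" "det (submatrix A I {0..<n}) \<noteq> 0"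
    using B A unfolding is_basis_def by auto
  have uniq: "y = x" if y: "y \<in> carrier_vec n" "\<forall>j\<in>I. row A j \<bullet> y = b $ j"
      and x: "x \<in> carrier_vec n" "\<forall>j\<in>I. row A j \<bullet> x = b $ j" for x y
  proof -
    have rc: "j \<in> I \<Longrightarrow> row A j \<in> carrier_vec n" for j using A by (simp add: carrier_vecI)
    have "\<forall>j\<in>I. row A j \<bullet> (y - x) = 0"
    proof
      fix j assume j: "j \<in> I"
      show "row A j \<bullet> (y - x) = 0"
        using scalar_prod_minus_distrib[OF rc[OF j] y(1) x(1)] y x j by auto
    qed
    then have "y - x = 0\<^sub>v n" using basis_lin(1)[OF A I] y x by auto
    then show "y = x" using y x
      by (metis carrier_vecD index_minus_vec(1) index_zero_vec(1) eq_vecI eq_iff_diff_eq_0 index_minus_vec(2))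
  qed
  obtain x where x: "x \<in> carrier_vec n" "\<forall>j\<in>I. row A j \<bullet> x = b $ j"
    using basis_lin(2)[OF A I, of b] by blast
  have ex1: "\<exists>!x. x \<in> carrier_vec (dim_col A) \<and> (\<forall>i \<in> I. row A i \<bullet> x = b $ i)"
    using x uniq A by auto
  have "basic_point A b I \<in> carrier_vec (dim_col A) \<and> (\<forall>i \<in> I. row A i \<bullet> basic_point A b I = b $ i)"
    unfolding basic_point_def by (rule theI'[OF ex1])
  then show bp: "basic_point A b I \<in> carrier_vec n \<and> (\<forall>j\<in>I. row A j \<bullet> basic_point A b I = b $ j)"
    using A by simp
  show "\<And>y. y \<in> carrier_vec n \<Longrightarrow> (\<forall>j\<in>I. row A j \<bullet> y = b $ j) \<Longrightarrow> y = basic_point A b I"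
    using uniq bp by blast
qed

lemma fb_facts:
  fixes A :: "real mat"
  assumes A: "A \<in> carrier_mat m n" and F: "feasible_basis A b I"
  shows "is_basis A I" "I \<subseteq> {0..<m}" "card I = n" "finite I"
    "basic_point A b I \<in> carrier_vec n"
    "\<And>j. j \<in> I \<Longrightarrow> row A j \<bullet> basic_point A b I = b $ j"
    "\<And>k. k < m \<Longrightarrow> row A k \<bullet> basic_point A b I \<ge> b $ k"
    "\<And>y. y \<in> carrier_vec n \<Longrightarrow> (\<forall>j\<in>I. row A j \<bullet> y = b $ j) \<Longrightarrow> y = basic_point A b I"
proof -
  show B: "is_basis A I" using F unfolding feasible_basis_def by simp
  show I: "I \<subseteq> {0..<m}" "card I = n" using B A unfolding is_basis_def by auto
  then show "finite I" using finite_subset by blast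
  show "basic_point A b I \<in> carrier_vec n" "\<And>j. j \<in> I \<Longrightarrow> row A j \<bullet> basic_point A b I = b $ j"
    using bp_char(1)[OF A B, of b] by auto
  show "\<And>k. k < m \<Longrightarrow> row A k \<bullet> basic_point A b I \<ge> b $ k"
    using F A unfolding feasible_basis_def polyhedron_def by auto
  show "\<And>y. y \<in> carrier_vec n \<Longrightarrow> (\<forall>j\<in>I. row A j \<bullet> y = b $ j) \<Longrightarrow> y = basic_point A b I"
    using bp_char(2)[OF A B] by blast
qed

lemma nondeg_eq:
  assumes "nondegenerate A b" "feasible_basis A b I" "feasible_basis A b J"
    "basic_point A b I = basic_point A b J"
  shows "I = J"
  using assms unfolding nondegenerate_def inj_on_def by auto

lemma helperH:
  fixes A :: "real mat"
  assumes A: "A \<in> carrier_mat m n" and nd: "nondegenerate A b"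
    and FI: "feasible_basis A b I" and FJ: "feasible_basis A b J"
    and z: "\<And>k. k < m \<Longrightarrow> row A k \<bullet> z \<ge> b $ k"
    and t: "0 < t" "t < 1"
    and rel: "\<And>k. k < m \<Longrightarrow> row A k \<bullet> basic_point A b J - row A k \<bullet> basic_point A b I
                 = t * (row A k \<bullet> z - row A k \<bullet> basic_point A b I)"
  shows "J = I"
proof -
  let ?x = "basic_point A b I" and ?y = "basic_point A b J"
  have "\<forall>j\<in>J. row A j \<bullet> ?x = b $ j"
  proof
    fix j assume j: "j \<in> J"
    show "row A j \<bullet> ?x = b $ j"
    proof (cases "j \<in> I")
      case True then show ?thesis using fb_facts(6)[OF A FI] by blast
    next
      case False
      have jm: "j < m" using fb_facts(2)[OF A FJ] j by auto
      have e: "row A j \<bullet> ?y = b $ j" using fb_facts(6)[OF A FJ j] .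
      have p: "row A j \<bullet> ?x - b $ j \<ge> 0" using fb_facts(7)[OF A FI jm] by simp
      have q: "row A j \<bullet> z - b $ j \<ge> 0" using z[OF jm] by simp
      have "0 = (1 - t) * (row A j \<bullet> ?x - b $ j) + t * (row A j \<bullet> z - b $ j)"
        using rel[OF jm] e by (simp add: algebra_simps)
      moreover have "(1 - t) * (row A j \<bullet> ?x - b $ j) \<ge> 0" using p t by simp
      moreover have "t * (row A j \<bullet> z - b $ j) \<ge> 0" using q t by simp
      ultimately have "(1 - t) * (row A j \<bullet> ?x - b $ j) = 0" by linarith
      then show ?thesis using t by simp
    qed
  qed
  then have "?x = ?y" using fb_facts(8)[OF A FJ] fb_facts(5)[OF A FI] by blast
  then show ?thesis using nondeg_eq[OF nd FI FJ] by simp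
qed

lemma strict_pos:
  fixes A :: "real mat"
  assumes A: "A \<in> carrier_mat m n" and nd: "nondegenerate A b"
    and FI: "feasible_basis A b I" and FJ: "feasible_basis A b J" and JI: "J \<noteq> I"
    and i: "i \<in> I" and sub: "I - {i} \<subseteq> J"
  shows "row A i \<bullet> basic_point A b J - row A i \<bullet> basic_point A b I > 0"
proof -
  let ?x = "basic_point A b I" and ?y = "basic_point A b J"
  have im: "i < m" using fb_facts(2)[OF A FI] i by auto
  have ge: "row A i \<bullet> ?y \<ge> row A i \<bullet> ?x"
    using fb_facts(7)[OF A FJ im] fb_facts(6)[OF A FI i] by simp
  have "row A i \<bullet> ?y \<noteq> row A i \<bullet> ?x"
  proof
    assume eq: "row A i \<bullet> ?y = row A i \<bullet> ?x"
    have "\<forall>j\<in>I. row A j \<bullet> ?y = b $ j"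
    proof
      fix j assume j: "j \<in> I"
      show "row A j \<bullet> ?y = b $ j"
      proof (cases "j = i")
        case True then show ?thesis using eq fb_facts(6)[OF A FI i] by simp
      next
        case False then have "j \<in> J" using sub j by auto
        then show ?thesis using fb_facts(6)[OF A FJ] by blast
      qed
    qed
    then have "?y = ?x" using fb_facts(8)[OF A FI] fb_facts(5)[OF A FJ] by blast
    then show False using nondeg_eq[OF nd FJ FI] JI by simp
  qed
  then show ?thesis using ge by simp
qed

lemma upper_bound:
  fixes A :: "real mat"
  assumes A: "A \<in> carrier_mat m n" and nd: "nondegenerate A b"
    and FI: "feasible_basis A b I" and F1: "feasible_basis A b J1" and F2: "feasible_basis A b J2"
    and i: "i \<in> I" and s1: "I - {i} \<subseteq> J1" and s2: "I - {i} \<subseteq> J2"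
    and n1: "J1 \<noteq> I" and n2: "J2 \<noteq> I"
  shows "J1 = J2"
proof (rule ccontr)
  assume ne: "J1 \<noteq> J2"
  let ?x = "basic_point A b I" and ?y1 = "basic_point A b J1" and ?y2 = "basic_point A b J2"
  have x: "?x \<in> carrier_vec n" and y1: "?y1 \<in> carrier_vec n" and y2: "?y2 \<in> carrier_vec n"
    using fb_facts(5) A FI F1 F2 by blast+
  define \<alpha> where "\<alpha> = row A i \<bullet> ?y1 - row A i \<bullet> ?x"
  define \<beta> where "\<beta> = row A i \<bullet> ?y2 - row A i \<bullet> ?x"
  have \<alpha>: "\<alpha> > 0" unfolding \<alpha>_def by (rule strict_pos[OF A nd FI F1 n1 i s1])
  have \<beta>: "\<beta> > 0" unfolding \<beta>_def by (rule strict_pos[OF A nd FI F2 n2 i s2])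
  define s where "s = \<alpha> / \<beta>"
  have s0: "s > 0" using \<alpha> \<beta> unfolding s_def by simp
  define v where "v = vec n (\<lambda>j. 1 * ?y1 $ j + (s - 1) * ?x $ j + (- s) * ?y2 $ j)"
  have rowv: "row A k \<bullet> v = (row A k \<bullet> ?y1 - row A k \<bullet> ?x) - s * (row A k \<bullet> ?y2 - row A k \<bullet> ?x)" for k
    unfolding v_def using sp_lin3[of ?y1 n ?x ?y2 "row A k" 1 "s - 1" "- s"] x y1 y2
    by (simp add: algebra_simps)
  have vc: "v \<in> carrier_vec n" unfolding v_def by simp
  have "\<forall>j\<in>I. row A j \<bullet> v = 0"
  proof
    fix j assume j: "j \<in> I"
    show "row A j \<bullet> v = 0"
    proof (cases "j = i")
      case True
      have "row A i \<bullet> v = \<alpha> - s * \<beta>" unfolding rowv \<alpha>_def \<beta>_def ..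
      then show ?thesis using \<beta> True by (simp add: s_def)
    next
      case False then have "j \<in> J1" "j \<in> J2" using s1 s2 j by auto
      then show ?thesis unfolding rowv using fb_facts(6)[OF A FI j] fb_facts(6)[OF A F1] fb_facts(6)[OF A F2] by simp
    qed
  qed
  then have v0: "v = 0\<^sub>v n"
    using basis_lin(1)[OF A fb_facts(2,3)[OF A FI]] FI vc unfolding feasible_basis_def is_basis_def
    using A by auto
  have rel: "row A k \<bullet> ?y1 - row A k \<bullet> ?x = s * (row A k \<bullet> ?y2 - row A k \<bullet> ?x)" if k: "k < m" for k
  proof -
    have "row A k \<in> carrier_vec n" using A k by (simp add: carrier_vecI)
    then have "row A k \<bullet> v = 0" using v0 by simp
    then show ?thesis unfolding rowv by simp
  qed
  consider "s = 1" | "s < 1" | "s > 1" by linarith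
  then show False
  proof cases
    case 1
    have "\<forall>j\<in>J2. row A j \<bullet> ?y1 = b $ j"
    proof
      fix j assume j: "j \<in> J2"
      have "j < m" using fb_facts(2)[OF A F2] j by auto
      then show "row A j \<bullet> ?y1 = b $ j" using rel[of j] 1 fb_facts(6)[OF A F2 j] by simp
    qed
    then have "?y1 = ?y2" using fb_facts(8)[OF A F2] y1 by blast
    then show False using nondeg_eq[OF nd F1 F2] ne by simp
  next
    case 2
    have "J1 = I"
      by (rule helperH[OF A nd FI F1 fb_facts(7)[OF A F2] s0 2 rel])
    then show False using n1 by simp
  next
    case 3
    have rel': "row A k \<bullet> ?y2 - row A k \<bullet> ?x = (1 / s) * (row A k \<bullet> ?y1 - row A k \<bullet> ?x)" if "k < m" for k
      using rel[OF that] s0 by (simp add: field_simps)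
    have "J2 = I"
      by (rule helperH[OF A nd FI F2 fb_facts(7)[OF A F1] _ _ rel']) (use 3 in auto)
    then show False using n2 by simp
  qed
qed


lemma nbr_facts:
  assumes G: "is_graph V E" and J: "J \<in> neighbors E I"
  shows "J \<in> V" "J \<noteq> I" "{I, J} \<in> E"
proof -
  have e: "{I, J} \<in> E" "J \<noteq> I" using J unfolding neighbors_def by auto
  then obtain I' J' where "{I, J} = {I', J'}" "I' \<in> V" "J' \<in> V"
    using G unfolding is_graph_def by blast
  moreover have "J \<in> {I, J}" by simp
  ultimately have "J \<in> {I', J'}" by simp
  then show "J \<in> V" using \<open>I' \<in> V\<close> \<open>J' \<in> V\<close> by blast
  show "J \<noteq> I" "{I, J} \<in> E" using e by auto
qed

lemma pigeon:
  fixes A :: "real mat"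
  assumes A: "A \<in> carrier_mat m n" and nd: "nondegenerate A b"
    and fV: "finite V" and G: "is_graph V E"
    and FV: "\<forall>I \<in> V. feasible_basis A b I"
    and c1: "\<forall>I \<in> V. \<forall>J \<in> neighbors E I. card (I \<inter> J) = n - 1"
    and c2: "\<forall>I \<in> V. card (neighbors E I) = n"
    and I: "I \<in> V" and i: "i \<in> I"
  shows "\<exists>J \<in> neighbors E I. I - {i} \<subseteq> J"
proof -
  let ?N = "neighbors E I"
  have FI: "feasible_basis A b I" using FV I by blast
  have fI: "finite I" and cI: "card I = n" using fb_facts(1-4)[OF A FI] by auto
  have "card I > 0" using i fI card_gt_0_iff by blast
  then have n1: "n \<ge> 1" using cI by simp
  have single: "\<exists>k. I - J = {k}" if J: "J \<in> ?N" for J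
  proof -
    have "card (I - J) = card I - card (I \<inter> J)"
      by (rule card_Diff_subset_Int) (use fI in simp)
    also have "\<dots> = 1" using c1 I J cI n1 by auto
    finally show ?thesis using card_1_singletonE by blast
  qed
  define g where "g J = (THE k. I - J = {k})" for J
  have g: "I - J = {g J}" if JN: "J \<in> ?N" for J
  proof -
    obtain k where k: "I - J = {k}" using single[OF JN] by blast
    have "g J = k" unfolding g_def by (rule the_equality) (use k in auto)
    then show ?thesis using k by simp
  qed
  have "?N \<subseteq> V" using nbr_facts(1)[OF G] by blast
  then have fN: "finite ?N" using fV finite_subset by blast
  have inj: "inj_on g ?N"
  proof (rule inj_onI)
    fix J1 J2 assume J1: "J1 \<in> ?N" and J2: "J2 \<in> ?N" and e: "g J1 = g J2"
    have gi: "g J1 \<in> I" using g[OF J1] by auto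
    show "J1 = J2"
    proof (rule upper_bound[OF A nd FI _ _ gi])
      show "feasible_basis A b J1" "feasible_basis A b J2"
        using FV nbr_facts(1)[OF G] J1 J2 by blast+
      show "I - {g J1} \<subseteq> J1" using g[OF J1] by auto
      show "I - {g J1} \<subseteq> J2" using g[OF J2] e by auto
      show "J1 \<noteq> I" "J2 \<noteq> I" using nbr_facts(2)[OF G] J1 J2 by blast+
    qed
  qed
  have sub: "g ` ?N \<subseteq> I" using g by auto
  have "card (g ` ?N) = n" using card_image[OF inj] c2 I by simp
  then have "g ` ?N = I" using card_subset_eq[OF fI sub] cI by simp
  then have "i \<in> g ` ?N" using i by simp
  then obtain J where J: "J \<in> ?N" "g J = i" by blast
  then show ?thesis using g[OF J(1)] by auto
qed

theorem theorem3p5: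
  fixes A :: "real mat" and b :: "real vec" and m n :: nat
    and V :: "nat set set" and E :: "nat set set set"
  assumes "A \<in> carrier_mat m n" and "b \<in> carrier_vec m"
    and "is_polytope A b"
    and "nondegenerate A b"
    and "finite V" and "is_graph V E"
    and "\<forall>I \<in> V. I \<subseteq> {0..<m}"
    and "V \<noteq> {}"
    and "\<forall>I \<in> V. feasible_basis A b I"
    and "\<forall>I \<in> V. \<forall>J \<in> neighbors E I. card (I \<inter> J) = n - 1"
    and "\<forall>I \<in> V. card (neighbors E I) = n"
  shows "V = bases_vertices A b \<and> E = bases_edges A b"
proof -
  note A = assms(1) and nd = assms(4) and fV = assms(5) and G = assms(6) and Vne = assms(8)
    and FV = assms(9) and c1 = assms(10) and c2 = assms(11)
  note PH = pigeon[OF A nd fV G FV c1 c2]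
  have dc: "dim_col A = n" using A by simp
  have allV: "K \<in> V" if FK: "feasible_basis A b K" for K
  proof -
    have KI: "K \<subseteq> {0..<m}" and fK: "finite K" using fb_facts(1-4)[OF A FK] by auto
    define c where "c = vec n (\<lambda>j. \<Sum>k\<in>K. A $$ (k, j))"
    have cc: "c \<in> carrier_vec n" unfolding c_def by (rule vec_carrier)
    have cv: "c \<bullet> v = (\<Sum>k\<in>K. row A k \<bullet> v)" if v: "v \<in> carrier_vec n" for v
    proof -
      have "c \<bullet> v = (\<Sum>j<n. \<Sum>k\<in>K. A $$ (k, j) * v $ j)"
        unfolding c_def scalar_prod_def using v by (simp add: sum_distrib_right atLeast0LessThan)
      also have "\<dots> = (\<Sum>k\<in>K. \<Sum>j<n. A $$ (k, j) * v $ j)" by (rule sum.swap)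
      also have "\<dots> = (\<Sum>k\<in>K. row A k \<bullet> v)"
      proof (rule sum.cong[OF refl])
        fix k assume "k \<in> K"
        then have "k < m" using KI by auto
        then show "(\<Sum>j<n. A $$ (k, j) * v $ j) = row A k \<bullet> v"
          unfolding scalar_prod_def using v A by (simp add: atLeast0LessThan)
      qed
      finally show ?thesis .
    qed
    define \<beta> where "\<beta> = (\<Sum>k\<in>K. b $ k)"
    have lb: "c \<bullet> basic_point A b J \<ge> \<beta>" if FJ: "feasible_basis A b J" for J
      unfolding cv[OF fb_facts(5)[OF A FJ]] \<beta>_def
      by (rule sum_mono) (use fb_facts(7)[OF A FJ] KI in auto)
    have eqK: "J = K" if FJ: "feasible_basis A b J" and e: "c \<bullet> basic_point A b J = \<beta>" for J
    proof -
      let ?y = "basic_point A b J"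
      have "(\<Sum>k\<in>K. row A k \<bullet> ?y - b $ k) = 0"
        using e unfolding cv[OF fb_facts(5)[OF A FJ]] \<beta>_def by (simp add: sum_subtractf)
      moreover have "\<forall>k\<in>K. row A k \<bullet> ?y - b $ k \<ge> 0" using fb_facts(7)[OF A FJ] KI by auto
      ultimately have "\<forall>k\<in>K. row A k \<bullet> ?y - b $ k = 0"
        using sum_nonneg_eq_0_iff[OF fK, of "\<lambda>k. row A k \<bullet> ?y - b $ k"] by simp
      then have "\<forall>k\<in>K. row A k \<bullet> ?y = b $ k" by simp
      then have "?y = basic_point A b K" by (rule fb_facts(8)[OF A FK fb_facts(5)[OF A FJ]])
      then show ?thesis using nondeg_eq[OF nd FJ FK] by simp
    qed
    have fKb: "c \<bullet> basic_point A b K = \<beta>"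
      unfolding cv[OF fb_facts(5)[OF A FK]] \<beta>_def using fb_facts(6)[OF A FK] by simp
    define f where "f J = c \<bullet> basic_point A b J" for J
    have "Min (f ` V) \<in> f ` V" using Min_in[of "f ` V"] fV Vne by simp
    then obtain I0 where I0: "I0 \<in> V" "f I0 = Min (f ` V)" by (metis imageE)
    have min: "f I0 \<le> f J" if "J \<in> V" for J using I0 Min_le[of "f ` V"] fV that by simp
    have FI0: "feasible_basis A b I0" using FV I0 by blast
    show "K \<in> V"
    proof (rule ccontr)
      assume KV: "K \<notin> V"
      then have nK: "I0 \<noteq> K" using I0 by auto
      have I0b: "is_basis A I0" "I0 \<subseteq> {0..<m}" "card I0 = n" using fb_facts(1-4)[OF A FI0] by auto
      then have det: "det (submatrix A I0 {0..<n}) \<noteq> 0" unfolding is_basis_def dc by simp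
      obtain \<mu> where \<mu>: "\<And>v. v \<in> carrier_vec n \<Longrightarrow> c \<bullet> v = (\<Sum>r<n. \<mu> r * (row A (pick I0 r) \<bullet> v))"
        using basis_lin(3)[OF A I0b(2,3) det cc] by blast
      have pickI: "r < n \<Longrightarrow> pick I0 r \<in> I0" for r using pick_in_set_le[of r I0] I0b by auto
      let ?x = "basic_point A b I0"
      show False
      proof (cases "\<forall>r<n. \<mu> r \<ge> 0")
        case True
        have "f K = (\<Sum>r<n. \<mu> r * (row A (pick I0 r) \<bullet> basic_point A b K))"
          unfolding f_def by (rule \<mu>[OF fb_facts(5)[OF A FK]])
        also have "\<dots> \<ge> (\<Sum>r<n. \<mu> r * (row A (pick I0 r) \<bullet> ?x))"
        proof (rule sum_mono)
          fix r assume r: "r \<in> {..<n}"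
          have "pick I0 r \<in> I0" using pickI r by simp
          then have "pick I0 r < m" using I0b(2) by auto
          then have "row A (pick I0 r) \<bullet> basic_point A b K \<ge> row A (pick I0 r) \<bullet> ?x"
            using fb_facts(7)[OF A FK] fb_facts(6)[OF A FI0 pickI] r by simp
          then show "\<mu> r * (row A (pick I0 r) \<bullet> ?x) \<le> \<mu> r * (row A (pick I0 r) \<bullet> basic_point A b K)"
            using True r by (simp add: mult_left_mono)
        qed
        also have "(\<Sum>r<n. \<mu> r * (row A (pick I0 r) \<bullet> ?x)) = f I0"
          unfolding f_def by (rule \<mu>[OF fb_facts(5)[OF A FI0], symmetric])
        finally have "f K \<ge> f I0" .
        moreover have "f I0 \<ge> \<beta>" unfolding f_def by (rule lb[OF FI0])
        moreover have "f K = \<beta>" unfolding f_def by (rule fKb)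
        ultimately have "c \<bullet> ?x = \<beta>" unfolding f_def by simp
        then show False using eqK[OF FI0] nK by simp
      next
        case False
        then obtain r0 where r0: "r0 < n" "\<mu> r0 < 0" by auto
        define i where "i = pick I0 r0"
        have i: "i \<in> I0" unfolding i_def using pickI r0 by simp
        obtain J where J: "J \<in> neighbors E I0" "I0 - {i} \<subseteq> J" using PH[OF I0(1) i] by blast
        have JV: "J \<in> V" and JI: "J \<noteq> I0" using nbr_facts[OF G J(1)] by auto
        have FJ: "feasible_basis A b J" using FV JV by blast
        let ?y = "basic_point A b J"
        have "f J - f I0 = (\<Sum>r<n. \<mu> r * (row A (pick I0 r) \<bullet> ?y - row A (pick I0 r) \<bullet> ?x))"
          unfolding f_def \<mu>[OF fb_facts(5)[OF A FJ]] \<mu>[OF fb_facts(5)[OF A FI0]]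
          by (simp add: sum_subtractf right_diff_distrib)
        also have "\<dots> = (\<Sum>r\<in>{r0}. \<mu> r * (row A (pick I0 r) \<bullet> ?y - row A (pick I0 r) \<bullet> ?x))"
        proof (rule sum.mono_neutral_right)
          show "finite {..<n}" by simp
          show "{r0} \<subseteq> {..<n}" using r0 by simp
          show "\<forall>r\<in>{..<n} - {r0}. \<mu> r * (row A (pick I0 r) \<bullet> ?y - row A (pick I0 r) \<bullet> ?x) = 0"
          proof
            fix r assume r: "r \<in> {..<n} - {r0}"
            have "pick I0 r \<noteq> i" unfolding i_def using pick_inj[of r I0 r0] r r0 I0b by auto
            then have "pick I0 r \<in> J" using J pickI r by auto
            then show "\<mu> r * (row A (pick I0 r) \<bullet> ?y - row A (pick I0 r) \<bullet> ?x) = 0"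
              using fb_facts(6)[OF A FJ] fb_facts(6)[OF A FI0 pickI] r by simp
          qed
        qed
        also have "\<dots> = \<mu> r0 * (row A i \<bullet> ?y - row A i \<bullet> ?x)" unfolding i_def by simp
        also have "\<dots> < 0"
          using strict_pos[OF A nd FI0 FJ JI i J(2)] r0 by (simp add: mult_neg_pos)
        finally have "f J < f I0" by simp
        then show False using min[OF JV] by simp
      qed
    qed
  qed
  have V: "V = bases_vertices A b"
    unfolding bases_vertices_def using allV FV by auto
  have E1: "E \<subseteq> bases_edges A b"
  proof
    fix e assume e: "e \<in> E"
    have "\<exists>I J. e = {I, J} \<and> I \<in> V \<and> J \<in> V \<and> I \<noteq> J"
      using G e unfolding is_graph_def by (elim ballE) auto
    then obtain I J where IJ: "e = {I, J}" "I \<in> V" "J \<in> V" "I \<noteq> J"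
      by (elim exE conjE) simp
    then have "J \<in> neighbors E I" using e unfolding neighbors_def by auto
    then have "card (I \<inter> J) = dim_col A - 1" using c1 IJ dc by auto
    moreover have "feasible_basis A b I" "feasible_basis A b J" using FV IJ by auto
    ultimately have "e = {I, J} \<and> feasible_basis A b I \<and> feasible_basis A b J \<and> I \<noteq> J
       \<and> card (I \<inter> J) = dim_col A - 1" using IJ by simp
    then have "\<exists>I' J'. e = {I', J'} \<and> feasible_basis A b I' \<and> feasible_basis A b J' \<and> I' \<noteq> J'
       \<and> card (I' \<inter> J') = dim_col A - 1" by blast
    then show "e \<in> bases_edges A b" unfolding bases_edges_def mem_Collect_eq .
  qed
  have E2: "bases_edges A b \<subseteq> E"
  proof
    fix e assume "e \<in> bases_edges A b"
    then have "\<exists>I J. e = {I, J} \<and> feasible_basis A b I \<and> feasible_basis A b J \<and> I \<noteq> J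
      \<and> card (I \<inter> J) = n - 1" unfolding bases_edges_def dc mem_Collect_eq .
    then obtain I J where IJ: "e = {I, J}" "feasible_basis A b I" "feasible_basis A b J" "I \<noteq> J"
      "card (I \<inter> J) = n - 1" by (elim exE conjE) simp
    have IV: "I \<in> V" using allV IJ by blast
    have fI: "finite I" "card I = n" "card J = n" "finite J" using fb_facts(1-4)[OF A IJ(2)] fb_facts(1-4)[OF A IJ(3)] by auto
    have n1: "n \<ge> 1"
    proof (rule ccontr)
      assume "\<not> n \<ge> 1" then have "n = 0" by simp
      then have "I = {}" "J = {}" using fI by auto
      then show False using IJ by simp
    qed
    have "card (I - J) = card I - card (I \<inter> J)"
      by (rule card_Diff_subset_Int) (use fI in simp)
    also have "\<dots> = 1" using IJ fI n1 by auto
    finally obtain i where i: "I - J = {i}" using card_1_singletonE by blast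
    then have iI: "i \<in> I" by auto
    obtain J' where J': "J' \<in> neighbors E I" "I - {i} \<subseteq> J'" using PH[OF IV iI] by blast
    have FJ': "feasible_basis A b J'" using nbr_facts(1)[OF G J'(1)] FV by blast
    have "J = J'"
    proof (rule upper_bound[OF A nd IJ(2) IJ(3) FJ' iI])
      show "I - {i} \<subseteq> J" using i by auto
      show "I - {i} \<subseteq> J'" by (rule J'(2))
      show "J \<noteq> I" using IJ by simp
      show "J' \<noteq> I" using nbr_facts(2)[OF G J'(1)] .
    qed
    then show "e \<in> E" using nbr_facts(3)[OF G J'(1)] IJ by simp
  qed
  show ?thesis using V E1 E2 by auto
qed

end
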